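(* Let $\mathcal{G}$ be a lattice of languages over a finite alphabet $A$ and $\tau:2^{A^*}\to Q$ a nice rating map. Let $S\subseteq Q$ be the set of all $s\in Q$ such that $\{\varepsilon\}$ is not $\mathcal{G}$-separable from $\tau_*^{-1}(s)$. Then $\iota_{\mathcal{G}}[\tau]=\sum_{s\in S}s$.
   Context: Fix a finite alphabet $A$. A lattice is a class of languages containing $\emptyset$ and $A^*$ and closed under union and intersection. $L_1$ is $\mathcal{G}$-separable from $L_2$ if some $K\in\mathcal{G}$ satisfies $L_1\subseteq K$ and $K\cap L_2=\emptyset$. A rating algebra is a finite commutative idempotent monoid $(Q,+)$ with neutral element $0_Q$, ordered by $q\le r$ iff $q+r=r$. A rating map is $\tau:2^{A^*}\to Q$ with $\tau(\emptyset)=0_Q$ and $\tau(K_1\cup K_2)=\tau(K_1)+\tau(K_2)$; it is nice if every $K\subseteq A^*$ has a finite subset $F$ with $\tau(K)=\tau(F)$. $\tau_*:A^*\to Q$ is $w\mapsto\tau(\{w\})$. A $\mathcal{G}$-identity is a language $L\in\mathcal{G}$ with $\varepsilon\in L$; there exists a $\mathcal{G}$-identity $L$ with $\tau(L)\le\tau(L')$ for every $\mathcal{G}$-identity $L'$, and $\iota_{\mathcal{G}}[\tau]$ denotes $\tau(L)$ for any such $L$. *)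

theory Defs
  imports Main
begin

text \<open>The rating algebra is a finite commutative idempotent monoid, modelled as a
  type of class comm_monoid_add and finite with an idempotency assumption.\<close>

definition lattice_of_langs :: "'a list set set \<Rightarrow> bool" where
  "lattice_of_langs G \<longleftrightarrow> {} \<in> G \<and> UNIV \<in> G \<and>
     (\<forall>K1\<in>G. \<forall>K2\<in>G. K1 \<union> K2 \<in> G \<and> K1 \<inter> K2 \<in> G)"

definition separable :: "'a list set set \<Rightarrow> 'a list set \<Rightarrow> 'a list set \<Rightarrow> bool" where
  "separable G L1 L2 \<longleftrightarrow> (\<exists>K\<in>G. L1 \<subseteq> K \<and> K \<inter> L2 = {})"

definition idempotent_monoid :: "'q::comm_monoid_add itself \<Rightarrow> bool" where
  "idempotent_monoid _ \<longleftrightarrow> (\<forall>q::'q. q + q = q)"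

definition rle :: "'q::comm_monoid_add \<Rightarrow> 'q \<Rightarrow> bool" where
  "rle q r \<longleftrightarrow> q + r = r"

definition rating_map :: "('a list set \<Rightarrow> 'q::comm_monoid_add) \<Rightarrow> bool" where
  "rating_map \<tau> \<longleftrightarrow> \<tau> {} = 0 \<and> (\<forall>K1 K2. \<tau> (K1 \<union> K2) = \<tau> K1 + \<tau> K2)"

definition nice :: "('a list set \<Rightarrow> 'q::comm_monoid_add) \<Rightarrow> bool" where
  "nice \<tau> \<longleftrightarrow> (\<forall>K. \<exists>F. finite F \<and> F \<subseteq> K \<and> \<tau> K = \<tau> F)"

definition tau_star :: "('a list set \<Rightarrow> 'q) \<Rightarrow> 'a list \<Rightarrow> 'q" where
  "tau_star \<tau> w = \<tau> {w}"

definition G_identity :: "'a list set set \<Rightarrow> 'a list set \<Rightarrow> bool" where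
  "G_identity G L \<longleftrightarrow> L \<in> G \<and> [] \<in> L"

definition iota :: "'a list set set \<Rightarrow> ('a list set \<Rightarrow> 'q::comm_monoid_add) \<Rightarrow> 'q" where
  "iota G \<tau> = (THE q. \<exists>L. G_identity G L \<and> \<tau> L = q \<and>
                        (\<forall>L'. G_identity G L' \<longrightarrow> rle (\<tau> L) (\<tau> L')))"

end

theory Submission
  imports Defs
begin

lemma le_sum_bound:
  fixes f :: "'b \<Rightarrow> 'q::comm_monoid_add"
  assumes "finite F" "\<forall>w\<in>F. f w + x = x"
  shows "sum f F + x = x"
  using assms
proof (induction F rule: finite_induct)
  case empty then show ?case by simp
next
  case (insert w F)
  then have "sum f (insert w F) + x = f w + (sum f F + x)" by (simp add: add.assoc)
  also have "\<dots> = x" using insert by simp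
  finally show ?case .
qed

lemma mem_le_sum:
  fixes f :: "'b \<Rightarrow> 'q::comm_monoid_add"
  assumes idem: "\<forall>q::'q. q + q = q" and "finite A" "a \<in> A"
  shows "f a + sum f A = sum f A"
proof -
  have "sum f A = f a + sum f (A - {a})" using assms by (simp add: sum.remove)
  then show ?thesis using idem by (metis add.assoc)
qed

lemma subset_le:
  fixes A B :: "'q::{comm_monoid_add,finite} set"
  assumes idem: "\<forall>q::'q. q + q = q" and "A \<subseteq> B"
  shows "(\<Sum>x\<in>A. x) + (\<Sum>x\<in>B. x) = (\<Sum>x\<in>B. x)"
  apply (rule le_sum_bound)
  using mem_le_sum[OF idem, of B _ "\<lambda>x. x"] assms by auto

lemma tau_fin:
  assumes "rating_map \<tau>" "finite F"
  shows "\<tau> F = (\<Sum>w\<in>F. \<tau> {w})"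
  using assms(2)
proof (induction F rule: finite_induct)
  case empty then show ?case using assms(1) by (simp add: rating_map_def)
next
  case (insert w F)
  have "\<tau> (insert w F) = \<tau> ({w} \<union> F)" by simp
  also have "\<dots> = \<tau> {w} + \<tau> F" using assms(1) unfolding rating_map_def by blast
  finally show ?case using insert by simp
qed

lemma tau_mono:
  assumes "rating_map \<tau>" "K1 \<subseteq> K2"
  shows "\<tau> K1 + \<tau> K2 = \<tau> K2"
proof -
  have "\<tau> (K1 \<union> K2) = \<tau> K1 + \<tau> K2" using assms(1) by (simp add: rating_map_def)
  then show ?thesis using assms(2) by (simp add: Un_absorb1)
qed

lemma antisym_q:
  fixes a b :: "'q::comm_monoid_add"
  assumes "a + b = b" "b + a = a" shows "a = b"
  using assms by (metis add.commute)

lemma tau_img: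
  fixes \<tau> :: "'a list set \<Rightarrow> 'q::{comm_monoid_add, finite}"
  assumes idem: "\<forall>q::'q. q + q = q" and r: "rating_map \<tau>" and n: "nice \<tau>"
  shows "\<tau> K = (\<Sum>x\<in>tau_star \<tau> ` K. x)"
proof -
  obtain F where F: "finite F" "F \<subseteq> K" "\<tau> K = \<tau> F" using n unfolding nice_def by blast
  have 1: "(\<Sum>x\<in>tau_star \<tau> ` K. x) + \<tau> K = \<tau> K"
    apply (rule le_sum_bound)
    using tau_mono[OF r] by (auto simp: tau_star_def)
  have "\<tau> K = (\<Sum>w\<in>F. \<tau> {w})" using F(3) tau_fin[OF r F(1)] by (rule trans)
  moreover have "(\<Sum>w\<in>F. \<tau> {w}) + (\<Sum>x\<in>tau_star \<tau> ` K. x) = (\<Sum>x\<in>tau_star \<tau> ` K. x)"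
    apply (rule le_sum_bound[OF F(1)])
    using mem_le_sum[OF idem, of "tau_star \<tau> ` K" _ "\<lambda>x. x"] F(2)
    by (auto simp: tau_star_def)
  ultimately show ?thesis using 1 antisym_q by metis
qed

lemma finite_Inter_in:
  assumes "lattice_of_langs G" "finite I" "\<forall>i\<in>I. f i \<in> G"
  shows "\<Inter>(f ` I) \<in> G"
  using assms(2,3)
proof (induction I rule: finite_induct)
  case empty then show ?case using assms(1) by (simp add: lattice_of_langs_def)
next
  case (insert i I) then show ?case using assms(1) by (simp add: lattice_of_langs_def)
qed

theorem lemma10p3:
  fixes G :: "('a::finite) list set set"
    and \<tau> :: "'a list set \<Rightarrow> 'q::{comm_monoid_add, finite}"
  assumes "idempotent_monoid TYPE('q)"
    and "lattice_of_langs G"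
    and "rating_map \<tau>"
    and "nice \<tau>"
  shows "iota G \<tau> =
    (\<Sum>s\<in>{s. \<not> separable G {[]} (tau_star \<tau> -` {s})}. s)"
proof -
  have idem: "\<forall>q::'q. q + q = q" using assms(1) by (simp add: idempotent_monoid_def)
  define S where "S = {s. \<not> separable G {[]} (tau_star \<tau> -` {s})}"
  have "\<forall>s\<in>-S. \<exists>K. K \<in> G \<and> [] \<in> K \<and> K \<inter> tau_star \<tau> -` {s} = {}"
    unfolding S_def separable_def by auto
  then obtain Lf where Lf: "\<forall>s\<in>-S. Lf s \<in> G \<and> [] \<in> Lf s \<and> Lf s \<inter> tau_star \<tau> -` {s} = {}"
    by metis
  define L0 where "L0 = \<Inter>(Lf ` (-S))"
  have L0G: "L0 \<in> G" unfolding L0_def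
    by (rule finite_Inter_in[OF assms(2)]) (use Lf in auto)
  have L0e: "[] \<in> L0" unfolding L0_def using Lf by auto
  have Ssub: "S \<subseteq> tau_star \<tau> ` L" if "L \<in> G" "[] \<in> L" for L
  proof
    fix s assume "s \<in> S"
    then have "\<not> (L \<inter> tau_star \<tau> -` {s} = {})"
      using that unfolding S_def separable_def by auto
    then show "s \<in> tau_star \<tau> ` L" by auto
  qed
  have img: "tau_star \<tau> ` L0 = S"
  proof
    show "tau_star \<tau> ` L0 \<subseteq> S"
    proof
      fix s assume "s \<in> tau_star \<tau> ` L0"
      then obtain w where w: "w \<in> L0" "s = tau_star \<tau> w" by auto
      show "s \<in> S"
      proof (rule ccontr)
        assume "s \<notin> S"
        then have "w \<in> Lf s" "Lf s \<inter> tau_star \<tau> -` {s} = {}" using w Lf unfolding L0_def by auto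
        then show False using w by auto
      qed
    qed
    show "S \<subseteq> tau_star \<tau> ` L0" using Ssub L0G L0e by blast
  qed
  have tL0: "\<tau> L0 = (\<Sum>s\<in>S. s)" using tau_img[OF idem assms(3,4)] img by simp
  have minL0: "rle (\<tau> L0) (\<tau> L')" if "G_identity G L'" for L'
  proof -
    have "S \<subseteq> tau_star \<tau> ` L'" using Ssub that by (simp add: G_identity_def)
    then show ?thesis using subset_le[OF idem] tau_img[OF idem assms(3,4)] tL0
      by (simp add: rle_def)
  qed
  have "iota G \<tau> = \<tau> L0"
    unfolding iota_def
  proof (rule the_equality)
    show "\<exists>L. G_identity G L \<and> \<tau> L = \<tau> L0 \<and> (\<forall>L'. G_identity G L' \<longrightarrow> rle (\<tau> L) (\<tau> L'))"
      using L0G L0e minL0 by (auto simp: G_identity_def)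
  next
    fix q assume "\<exists>L. G_identity G L \<and> \<tau> L = q \<and> (\<forall>L'. G_identity G L' \<longrightarrow> rle (\<tau> L) (\<tau> L'))"
    then obtain L where L: "G_identity G L" "\<tau> L = q" "\<forall>L'. G_identity G L' \<longrightarrow> rle (\<tau> L) (\<tau> L')"
      by blast
    have "rle q (\<tau> L0)" using L L0G L0e by (auto simp: G_identity_def)
    moreover have "rle (\<tau> L0) q" using minL0 L by auto
    ultimately show "q = \<tau> L0" unfolding rle_def using antisym_q by metis
  qed
  then show ?thesis using tL0 S_def by simp
qed

end
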